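(* Let $X$ be a simplicial set and let $S\subseteq X^\sharp$ be any set of non-degenerate simplices. Then there is a canonical simplicial map $\bigsqcup_{s\in S}\Delta[m_s]\to DX$ such that the square with top map $\sqcup_{s\in S}\rho_s:\bigsqcup_{s\in S}\Delta[n_s]\to\bigsqcup_{s\in S}\Delta[m_s]$, left map $(\bar s)_{s\in S}:\bigsqcup_{s\in S}\Delta[n_s]\to X$, and bottom map $\eta_X:X\to DX$ commutes. Equivalently, for each non-degenerate $x$, the composite $\eta_X\circ\bar x:\Delta[n_x]\to DX$ factors through $\rho_x:\Delta[n_x]\to\Delta[m_x]$.
   Context: Simplicial operators act on the right; $\bar x:\Delta[n]\to X$ is the representing map of an $n$-simplex $x$; $X^\sharp$ is the set of non-degenerate simplices and $n_x$ the degree of $x$; $\varepsilon_i:[0]\to[n]$ is $0\mapsto i$. A simplicial set is non-singular if every non-degenerate simplex has degreewise injective representing map. The desingularization $DX$ is the image of $X\to\prod_f Y$, $x\mapsto(f(x))_f$, over all quotient maps $f:X\to Y$ (maps $X\to X/R$ for operator-compatible families of equivalence relations) with $Y$ non-singular; $\eta_X:X\to DX$ is the corestriction. Enforcer: for $x\in X^\sharp$ of degree $n$, let $i\sim j$ iff $x\varepsilon_i=x\varepsilon_j$, $i\approx k$ iff some $j$ has $i\le k\le j$ and $i\sim j$, and $\simeq$ the equivalence relation generated by $\approx$; its classes are intervals, and $\rho_x:[n]\to[m_x]$ is the order-preserving surjection onto the ordered quotient $\{0,\dots,n\}/\simeq\cong[m_x]$ (also viewed as a map $\Delta[n]\to\Delta[m_x]$).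 *)

theory Defs
  imports Main
begin

text \<open>A simplicial
operator theta : [m] -> [n] is represented by a function nat => nat whose values
on {0..m} matter.  act X n m theta x is x.theta for an n-simplex x.\<close>

record 'a sset =
  sim :: "nat \<Rightarrow> 'a set"
  act :: "nat \<Rightarrow> nat \<Rightarrow> (nat \<Rightarrow> nat) \<Rightarrow> 'a \<Rightarrow> 'a"

definition sop :: "nat \<Rightarrow> nat \<Rightarrow> (nat \<Rightarrow> nat) \<Rightarrow> bool" where
  "sop m n \<theta> \<longleftrightarrow> (\<forall>i\<le>m. \<theta> i \<le> n) \<and> (\<forall>i j. i \<le> j \<longrightarrow> j \<le> m \<longrightarrow> \<theta> i \<le> \<theta> j)"

definition is_sset :: "'a sset \<Rightarrow> bool" where
  "is_sset X \<longleftrightarrow>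
     (\<forall>n m. n \<noteq> m \<longrightarrow> sim X n \<inter> sim X m = {}) \<and>
     (\<forall>n m \<theta> x. sop m n \<theta> \<longrightarrow> x \<in> sim X n \<longrightarrow> act X n m \<theta> x \<in> sim X m) \<and>
     (\<forall>n m \<theta> \<theta>' x. sop m n \<theta> \<longrightarrow> (\<forall>i\<le>m. \<theta> i = \<theta>' i) \<longrightarrow> x \<in> sim X n
        \<longrightarrow> act X n m \<theta> x = act X n m \<theta>' x) \<and>
     (\<forall>n x. x \<in> sim X n \<longrightarrow> act X n n id x = x) \<and>
     (\<forall>n m k \<theta> \<phi> x. sop m n \<theta> \<longrightarrow> sop k m \<phi> \<longrightarrow> x \<in> sim X n \<longrightarrow>
        act X m k \<phi> (act X n m \<theta> x) = act X n k (\<theta> \<circ> \<phi>) x)"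

definition smap :: "'a sset \<Rightarrow> 'b sset \<Rightarrow> ('a \<Rightarrow> 'b) \<Rightarrow> bool" where
  "smap X Y f \<longleftrightarrow>
     (\<forall>n x. x \<in> sim X n \<longrightarrow> f x \<in> sim Y n) \<and>
     (\<forall>n m \<theta> x. sop m n \<theta> \<longrightarrow> x \<in> sim X n \<longrightarrow> f (act X n m \<theta> x) = act Y n m \<theta> (f x))"

text \<open>Degree of a simplex (well defined since the sets of n-simplices are disjoint).\<close>
definition deg :: "'a sset \<Rightarrow> 'a \<Rightarrow> nat" where
  "deg X x = (THE n. x \<in> sim X n)"

definition degenerate :: "'a sset \<Rightarrow> nat \<Rightarrow> 'a \<Rightarrow> bool" where
  "degenerate X n x \<longleftrightarrow> (\<exists>m<n. \<exists>\<sigma> y. sop n m \<sigma> \<and> \<sigma> ` {0..n} = {0..m} \<and>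
      y \<in> sim X m \<and> x = act X m n \<sigma> y)"

definition nondeg :: "'a sset \<Rightarrow> nat \<Rightarrow> 'a \<Rightarrow> bool" where
  "nondeg X n x \<longleftrightarrow> x \<in> sim X n \<and> \<not> degenerate X n x"

definition nondeg_simplices :: "'a sset \<Rightarrow> 'a set" where
  "nondeg_simplices X = {x. \<exists>n. nondeg X n x}"

definition nonsingular :: "'a sset \<Rightarrow> bool" where
  "nonsingular X \<longleftrightarrow> (\<forall>n x. nondeg X n x \<longrightarrow> (\<forall>m \<theta> \<theta>'. sop m n \<theta> \<longrightarrow> sop m n \<theta>' \<longrightarrow>
       act X n m \<theta> x = act X n m \<theta>' x \<longrightarrow> (\<forall>i\<le>m. \<theta> i = \<theta>' i)))"

definition compatible :: "'a sset \<Rightarrow> (nat \<Rightarrow> ('a \<times> 'a) set) \<Rightarrow> bool" where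
  "compatible X R \<longleftrightarrow> (\<forall>n. equiv (sim X n) (R n)) \<and>
     (\<forall>n m \<theta> x y. sop m n \<theta> \<longrightarrow> (x, y) \<in> R n \<longrightarrow> (act X n m \<theta> x, act X n m \<theta> y) \<in> R m)"

definition quot :: "'a sset \<Rightarrow> (nat \<Rightarrow> ('a \<times> 'a) set) \<Rightarrow> 'a set sset" where
  "quot X R = \<lparr> sim = (\<lambda>n. sim X n // R n),
                act = (\<lambda>n m \<theta> C. \<Union>x\<in>C. R m `` {act X n m \<theta> x}) \<rparr>"

text \<open>Desingularization: image of X in the product of all non-singular quotients X/R.
Simplices of the product are tagged with their degree.\<close>
definition desing_index :: "'a sset \<Rightarrow> (nat \<Rightarrow> ('a \<times> 'a) set) set" where
  "desing_index X = {R. compatible X R \<and> nonsingular (quot X R)}"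

type_synonym 'a dsimp = "nat \<times> ((nat \<Rightarrow> ('a \<times> 'a) set) \<Rightarrow> 'a set)"

definition prod_map :: "'a sset \<Rightarrow> 'a \<Rightarrow> 'a dsimp" where
  "prod_map X x = (deg X x, (\<lambda>R. if R \<in> desing_index X then R (deg X x) `` {x} else {}))"

definition Desing :: "'a sset \<Rightarrow> 'a dsimp sset" where
  "Desing X = \<lparr> sim = (\<lambda>n. prod_map X ` sim X n),
                act = (\<lambda>n m \<theta> z. (m, (\<lambda>R. if R \<in> desing_index X
                         then act (quot X R) n m \<theta> (snd z R) else {}))) \<rparr>"

definition eta :: "'a sset \<Rightarrow> 'a \<Rightarrow> 'a dsimp" where
  "eta X = prod_map X"

text \<open>Standard simplex Delta[n]: k-simplices are tagged operators [k] -> [n]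
(normalised to 0 outside {0..k}).\<close>
definition Delta :: "nat \<Rightarrow> (nat \<times> (nat \<Rightarrow> nat)) sset" where
  "Delta n = \<lparr> sim = (\<lambda>k. {(k, \<theta>) | \<theta>. sop k n \<theta> \<and> (\<forall>i>k. \<theta> i = 0)}),
               act = (\<lambda>k m \<phi> y. (m, (\<lambda>i. if i \<le> m then snd y (\<phi> i) else 0))) \<rparr>"

definition coprod :: "'i set \<Rightarrow> ('i \<Rightarrow> 'b sset) \<Rightarrow> ('i \<times> 'b) sset" where
  "coprod S F = \<lparr> sim = (\<lambda>k. {(s, y). s \<in> S \<and> y \<in> sim (F s) k}),
                  act = (\<lambda>n m \<theta> z. (fst z, act (F (fst z)) n m \<theta> (snd z))) \<rparr>"

definition vsim :: "'a sset \<Rightarrow> 'a \<Rightarrow> nat \<Rightarrow> nat \<Rightarrow> bool" where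
  "vsim X x i j \<longleftrightarrow> act X (deg X x) 0 (\<lambda>_. i) x = act X (deg X x) 0 (\<lambda>_. j) x"

definition vapprox :: "'a sset \<Rightarrow> 'a \<Rightarrow> (nat \<times> nat) set" where
  "vapprox X x = {(i, k). \<exists>j\<le>deg X x. i \<le> k \<and> k \<le> j \<and> vsim X x i j}"

definition vsimeq :: "'a sset \<Rightarrow> 'a \<Rightarrow> (nat \<times> nat) set" where
  "vsimeq X x = (vapprox X x \<union> (vapprox X x)\<inverse>)\<^sup>* \<inter> ({0..deg X x} \<times> {0..deg X x})"

definition mdeg :: "'a sset \<Rightarrow> 'a \<Rightarrow> nat" where
  "mdeg X x = card ({0..deg X x} // vsimeq X x) - 1"

text \<open>rho_x i = position of the class of i in the ordered quotient (classes are intervals).\<close>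
definition rho :: "'a sset \<Rightarrow> 'a \<Rightarrow> nat \<Rightarrow> nat" where
  "rho X x i = card {C \<in> {0..deg X x} // vsimeq X x. \<forall>c\<in>C. c < i}"

definition rho_map :: "'a sset \<Rightarrow> 'a \<Rightarrow> nat \<times> (nat \<Rightarrow> nat) \<Rightarrow> nat \<times> (nat \<Rightarrow> nat)" where
  "rho_map X x y = (fst y, (\<lambda>i. if i \<le> fst y then rho X x (snd y i) else 0))"

definition coprod_rho :: "'a sset \<Rightarrow> 'a \<times> (nat \<times> (nat \<Rightarrow> nat)) \<Rightarrow> 'a \<times> (nat \<times> (nat \<Rightarrow> nat))" where
  "coprod_rho X z = (fst z, rho_map X (fst z) (snd z))"

definition coprod_rep :: "'a sset \<Rightarrow> 'a \<times> (nat \<times> (nat \<Rightarrow> nat)) \<Rightarrow> 'a" where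
  "coprod_rep X z = act X (deg X (fst z)) (fst (snd z)) (snd (snd z)) (fst z)"

end

theory Submission
  imports Defs
begin

lemma ss_disj: "is_sset X \<Longrightarrow> n \<noteq> m \<Longrightarrow> sim X n \<inter> sim X m = {}"
  unfolding is_sset_def by blast
lemma ss_cl: "is_sset X \<Longrightarrow> sop m n \<theta> \<Longrightarrow> x \<in> sim X n \<Longrightarrow> act X n m \<theta> x \<in> sim X m"
  unfolding is_sset_def by blast
lemma ss_cong: "is_sset X \<Longrightarrow> sop m n \<theta> \<Longrightarrow> (\<forall>i\<le>m. \<theta> i = \<theta>' i) \<Longrightarrow> x \<in> sim X n
        \<Longrightarrow> act X n m \<theta> x = act X n m \<theta>' x"
  unfolding is_sset_def by blast
lemma ss_id: "is_sset X \<Longrightarrow> x \<in> sim X n \<Longrightarrow> act X n n id x = x"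
  unfolding is_sset_def by blast
lemma ss_comp: "is_sset X \<Longrightarrow> sop m n \<theta> \<Longrightarrow> sop k m \<phi> \<Longrightarrow> x \<in> sim X n \<Longrightarrow>
        act X m k \<phi> (act X n m \<theta> x) = act X n k (\<theta> \<circ> \<phi>) x"
  unfolding is_sset_def by blast

lemma sop_comp: "sop m n \<theta> \<Longrightarrow> sop k m \<phi> \<Longrightarrow> sop k n (\<theta> \<circ> \<phi>)"
  unfolding sop_def by auto
lemma sop_id: "sop n n id" unfolding sop_def by auto

lemma ss_deg: "is_sset X \<Longrightarrow> y \<in> sim X k \<Longrightarrow> deg X y = k"
  unfolding deg_def
  by (rule the_equality) (auto dest: ss_disj)

lemma quot_act:
  assumes X: "is_sset X" and c: "compatible X R" and x: "x \<in> sim X n" and t: "sop m n \<theta>"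
  shows "act (quot X R) n m \<theta> (R n `` {x}) = R m `` {act X n m \<theta> x}"
proof -
  have eq: "\<And>k. equiv (sim X k) (R k)" using c unfolding compatible_def by blast
  have cp: "\<And>a b. (a, b) \<in> R n \<Longrightarrow> (act X n m \<theta> a, act X n m \<theta> b) \<in> R m"
    using c t unfolding compatible_def by blast
  have "x \<in> R n `` {x}" using eq[of n] x by (simp add: equiv_def refl_on_def)
  moreover have H: "\<And>y. y \<in> R n `` {x} \<Longrightarrow> R m `` {act X n m \<theta> y} = R m `` {act X n m \<theta> x}"
  proof -
    fix y assume "y \<in> R n `` {x}"
    then have "(x, y) \<in> R n" by simp
    then have "(act X n m \<theta> x, act X n m \<theta> y) \<in> R m" by (rule cp)
    then have "R m `` {act X n m \<theta> x} = R m `` {act X n m \<theta> y}"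
      by (rule equiv_class_eq[OF eq[of m]])
    then show "R m `` {act X n m \<theta> y} = R m `` {act X n m \<theta> x}" by (rule sym)
  qed
  ultimately have "(\<Union>y\<in>R n `` {x}. R m `` {act X n m \<theta> y}) = R m `` {act X n m \<theta> x}"
    by (intro UN_constant_eq[where a=x]) blast+
  then show ?thesis unfolding quot_def by simp
qed

lemma EZ:
  assumes X: "is_sset X" and c: "compatible X R"
  shows "z \<in> sim (quot X R) n \<Longrightarrow> \<exists>m \<sigma> w. sop n m \<sigma> \<and> w \<in> sim X m \<and>
      nondeg (quot X R) m (R m `` {w}) \<and> z = R n `` {act X m n \<sigma> w}"
proof (induction n arbitrary: z rule: less_induct)
  case (less n)
  have eq: "\<And>k. equiv (sim X k) (R k)" using c unfolding compatible_def by blast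
  from less.prems obtain x0 where x0: "x0 \<in> sim X n" and z: "z = R n `` {x0}"
    unfolding quot_def by (auto elim: quotientE)
  show ?case
  proof (cases "nondeg (quot X R) n z")
    case True
    then have "sop n n id \<and> x0 \<in> sim X n \<and> nondeg (quot X R) n (R n `` {x0}) \<and> z = R n `` {act X n n id x0}"
      using x0 z ss_id[OF X x0] sop_id by simp
    then show ?thesis by blast
  next
    case False
    then have "degenerate (quot X R) n z" using less.prems unfolding nondeg_def by blast
    then obtain m \<sigma> y where m: "m < n" and s: "sop n m \<sigma>" and y: "y \<in> sim (quot X R) m"
      and zy: "z = act (quot X R) m n \<sigma> y" unfolding degenerate_def by blast
    from y obtain y0 where y0: "y0 \<in> sim X m" and yy: "y = R m `` {y0}"
      unfolding quot_def by (auto elim: quotientE)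
    from less.IH[OF m y] obtain m' \<tau> w where t: "sop m m' \<tau>" and w: "w \<in> sim X m'"
      and nd: "nondeg (quot X R) m' (R m' `` {w})" and yw: "y = R m `` {act X m' m \<tau> w}" by blast
    have wt: "act X m' m \<tau> w \<in> sim X m" using ss_cl[OF X t w] .
    have "(y0, act X m' m \<tau> w) \<in> R m"
      using eq_equiv_class_iff[OF eq[of m] y0 wt] yy yw by simp
    then have "(act X m n \<sigma> y0, act X m n \<sigma> (act X m' m \<tau> w)) \<in> R n"
      using c s unfolding compatible_def by blast
    then have "R n `` {act X m n \<sigma> y0} = R n `` {act X m n \<sigma> (act X m' m \<tau> w)}"
      by (rule equiv_class_eq[OF eq[of n]])
    then have "R n `` {act X m n \<sigma> y0} = R n `` {act X m' n (\<tau> \<circ> \<sigma>) w}"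
      using ss_comp[OF X t s w] by simp
    moreover have "z = R n `` {act X m n \<sigma> y0}" using zy yy quot_act[OF X c y0 s] by simp
    ultimately have "sop n m' (\<tau> \<circ> \<sigma>) \<and> w \<in> sim X m' \<and> nondeg (quot X R) m' (R m' `` {w}) \<and> z = R n `` {act X m' n (\<tau> \<circ> \<sigma>) w}"
      using sop_comp[OF t s] w nd by simp
    then show ?thesis by blast
  qed
qed


lemma vsimeq_equiv: "equiv {0..deg X x} (vsimeq X x)"
proof -
  let ?r = "vapprox X x \<union> (vapprox X x)\<inverse>"
  have sy: "sym (?r\<^sup>*)" by (rule sym_rtrancl) (auto simp: sym_def)
  show ?thesis unfolding equiv_def refl_on_def vsimeq_def
    using sy by (auto simp: sym_def trans_def intro: rtrancl_trans)
qed

lemma fin_quot: "finite ({0..deg X x} // vsimeq X x)"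
  by (rule finite_quotient) (auto simp: vsimeq_def)

lemma rho_mono: "i \<le> j \<Longrightarrow> rho X x i \<le> rho X x j"
  unfolding rho_def by (rule card_mono) (use fin_quot[of X x] in auto)

lemma rho_0: "rho X x 0 = 0"
proof -
  have "{C \<in> {0..deg X x} // vsimeq X x. \<forall>c\<in>C. c < 0} = {}"
    using in_quotient_imp_non_empty[OF vsimeq_equiv[of X x]] by auto
  then show ?thesis unfolding rho_def by simp
qed

lemma class_of: "C \<in> {0..deg X x} // vsimeq X x \<Longrightarrow> l \<in> C \<Longrightarrow> C = vsimeq X x `` {l}"
proof -
  assume C: "C \<in> {0..deg X x} // vsimeq X x" and l: "l \<in> C"
  from C obtain a where a: "C = vsimeq X x `` {a}" by (auto elim: quotientE)
  with l have "(a, l) \<in> vsimeq X x" by simp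
  then have "vsimeq X x `` {a} = vsimeq X x `` {l}" by (rule equiv_class_eq[OF vsimeq_equiv])
  with a show ?thesis by simp
qed

lemma rho_n: "rho X x (deg X x) = mdeg X x"
proof -
  let ?Q = "{0..deg X x} // vsimeq X x"
  let ?Cn = "vsimeq X x `` {deg X x}"
  have cn: "?Cn \<in> ?Q" by (rule quotientI) simp
  have "{C \<in> ?Q. \<forall>c\<in>C. c < deg X x} = ?Q - {?Cn}"
  proof (intro equalityI subsetI)
    fix C assume C: "C \<in> {C \<in> ?Q. \<forall>c\<in>C. c < deg X x}"
    have dn: "deg X x \<in> ?Cn" using vsimeq_equiv[of X x]
      by (simp add: equiv_def refl_on_def)
    have "C \<noteq> ?Cn"
    proof
      assume "C = ?Cn"
      then have "deg X x \<in> C" using dn by simp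
      then have "deg X x < deg X x" using C by blast
      then show False by simp
    qed
    then show "C \<in> ?Q - {?Cn}" using C by simp
  next
    fix C assume C: "C \<in> ?Q - {?Cn}"
    then have sub: "C \<subseteq> {0..deg X x}" using in_quotient_imp_subset[OF vsimeq_equiv[of X x]] by simp
    have "deg X x \<notin> C"
    proof
      assume "deg X x \<in> C"
      then have "C = ?Cn" using C by (intro class_of) auto
      then show False using C by simp
    qed
    have "\<forall>c\<in>C. c < deg X x"
    proof
      fix c assume "c \<in> C"
      then have "c \<le> deg X x" "c \<noteq> deg X x" using sub \<open>deg X x \<notin> C\<close> by auto
      then show "c < deg X x" by simp
    qed
    then show "C \<in> {C \<in> ?Q. \<forall>c\<in>C. c < deg X x}" using C by blast
  qed
  then have "rho X x (deg X x) = card (?Q - {?Cn})" unfolding rho_def by simp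
  also have "\<dots> = card ?Q - 1" using cn fin_quot[of X x] by (simp add: card_Diff_singleton)
  finally show ?thesis unfolding mdeg_def .
qed

lemma rho_step: "rho X x (Suc l) \<le> Suc (rho X x l)"
proof -
  let ?Q = "{0..deg X x} // vsimeq X x"
  let ?A = "\<lambda>i. {C \<in> ?Q. \<forall>c\<in>C. c < i}"
  have fa: "finite (?A l)" using fin_quot[of X x] by simp
  have "?A (Suc l) \<subseteq> insert (vsimeq X x `` {l}) (?A l)"
  proof
    fix C assume C: "C \<in> ?A (Suc l)"
    show "C \<in> insert (vsimeq X x `` {l}) (?A l)"
    proof (cases "\<forall>c\<in>C. c < l")
      case True then show ?thesis using C by simp
    next
      case False
      then obtain c where c: "c \<in> C" "\<not> c < l" by blast
      then have "c < Suc l" using C by blast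
      with c have "c = l" by simp
      with c have "l \<in> C" by simp
      then have "C = vsimeq X x `` {l}" using C by (intro class_of) auto
      then show ?thesis by simp
    qed
  qed
  then have "card (?A (Suc l)) \<le> card (insert (vsimeq X x `` {l}) (?A l))"
    by (rule card_mono[rotated]) (use fa in simp)
  also have "\<dots> \<le> Suc (card (?A l))" using fa by (simp add: card_insert_if)
  finally show ?thesis unfolding rho_def .
qed

lemma disc_ivt:
  fixes f :: "nat \<Rightarrow> nat"
  assumes f0: "f 0 = 0" and fs: "\<And>l. f (Suc l) \<le> Suc (f l)"
  shows "j \<le> f N \<Longrightarrow> \<exists>i\<le>N. f i = j"
proof (induction N)
  case 0 then have "f 0 = j" using f0 by simp
  then show ?case by blast
next
  case (Suc N)
  show ?case
  proof (cases "j \<le> f N")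
    case True
    then obtain i where "i \<le> N" "f i = j" using Suc.IH by blast
    then have "i \<le> Suc N" "f i = j" by simp_all
    then show ?thesis by blast
  next
    case False
    have "f (Suc N) \<le> Suc (f N)" by (rule fs)
    with False Suc.prems have "j = f (Suc N)" by simp
    then show ?thesis by blast
  qed
qed

lemma rho_surj: "j \<le> mdeg X x \<Longrightarrow> \<exists>i\<le>deg X x. rho X x i = j"
proof -
  assume j: "j \<le> mdeg X x"
  then have "j \<le> rho X x (deg X x)" by (simp add: rho_n)
  then show ?thesis by (rule disc_ivt[of "rho X x", OF rho_0 rho_step])
qed

lemma rho_section:
  assumes "sop k (mdeg X x) \<phi>"
  shows "\<exists>\<theta>. sop k (deg X x) \<theta> \<and> (\<forall>i\<le>k. rho X x (\<theta> i) = \<phi> i)"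
proof -
  define sec where "sec j = (LEAST i. rho X x i = j)" for j
  have sr: "rho X x (sec j) = j" and sn: "sec j \<le> deg X x" if jm: "j \<le> mdeg X x" for j
  proof -
    obtain i where "i \<le> deg X x" "rho X x i = j" using rho_surj[OF jm] by blast
    then show "rho X x (sec j) = j" "sec j \<le> deg X x" unfolding sec_def
      by (auto intro: LeastI Least_le order_trans)
  qed
  have sm: "sec a \<le> sec b" if "a \<le> b" "b \<le> mdeg X x" for a b
  proof (rule ccontr)
    assume "\<not> sec a \<le> sec b"
    then have lt: "sec b < sec a" by simp
    then have "rho X x (sec b) \<noteq> a" unfolding sec_def using not_less_Least by blast
    moreover have "rho X x (sec b) \<le> rho X x (sec a)" using lt by (intro rho_mono) simp
    ultimately show False using sr that by fastforce
  qed
  show ?thesis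
    apply (rule exI[of _ "sec \<circ> \<phi>"])
    using assms sr sn sm unfolding sop_def by auto
qed

lemma rho_factor:
  assumes s: "sop (deg X x) m \<sigma>"
    and v: "\<And>i j. i \<le> deg X x \<Longrightarrow> j \<le> deg X x \<Longrightarrow> vsim X x i j \<Longrightarrow> \<sigma> i = \<sigma> j"
  shows "\<And>i j. i \<le> deg X x \<Longrightarrow> j \<le> deg X x \<Longrightarrow> rho X x i = rho X x j \<Longrightarrow> \<sigma> i = \<sigma> j"
proof -
  let ?n = "deg X x"
  have V: "\<sigma> p = \<sigma> q" if "(p, q) \<in> vapprox X x" for p q
  proof -
    from that obtain j where j: "j \<le> ?n" "p \<le> q" "q \<le> j" "vsim X x p j"
      unfolding vapprox_def by blast
    then have "\<sigma> p = \<sigma> j" using v by auto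
    moreover have "\<sigma> p \<le> \<sigma> q" "\<sigma> q \<le> \<sigma> j" using s j unfolding sop_def by auto
    ultimately show ?thesis by simp
  qed
  have E: "\<sigma> a = \<sigma> b" if "(a, b) \<in> vsimeq X x" for a b
  proof -
    have "(a, b) \<in> (vapprox X x \<union> (vapprox X x)\<inverse>)\<^sup>*" using that unfolding vsimeq_def by blast
    then show ?thesis
    proof (induction rule: rtrancl_induct)
      case base then show ?case by simp
    next
      case (step b c) then show ?case using V by auto
    qed
  qed
  have smono: "\<sigma> a \<le> \<sigma> b" if "a \<le> b" "b \<le> ?n" for a b
    using s that unfolding sop_def by blast
  have lt: "\<sigma> i = \<sigma> j" if "i < j" "j \<le> ?n" "rho X x i = rho X x j" for i j
  proof -
    let ?Q = "{0..?n} // vsimeq X x"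
    let ?A = "\<lambda>i. {C \<in> ?Q. \<forall>c\<in>C. c < i}"
    have sub: "?A i \<subseteq> ?A j" using that by auto
    have fin: "finite (?A j)" using fin_quot[of X x] by auto
    have cd: "card (?A i) = card (?A j)" using that(3) unfolding rho_def .
    have AA: "?A i = ?A j" by (rule card_subset_eq[OF fin sub cd])
    have ci: "vsimeq X x `` {i} \<in> ?Q" by (rule quotientI) (use that in simp)
    have ii: "i \<in> vsimeq X x `` {i}" using vsimeq_equiv[of X x] that
      by (simp add: equiv_def refl_on_def)
    have "vsimeq X x `` {i} \<notin> ?A i" using ii by blast
    then have "vsimeq X x `` {i} \<notin> ?A j" using AA by simp
    then have "\<not> (\<forall>c\<in>vsimeq X x `` {i}. c < j)" using ci by blast
    then obtain c where c: "c \<in> vsimeq X x `` {i}" "\<not> c < j" by blast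
    then have ic: "(i, c) \<in> vsimeq X x" by simp
    then have "c \<le> ?n" unfolding vsimeq_def by auto
    moreover have "j \<le> c" using c(2) by simp
    ultimately have "\<sigma> i \<le> \<sigma> j" "\<sigma> j \<le> \<sigma> c" using that(1,2)
      by (auto intro!: smono)
    then show ?thesis using E[OF ic] by simp
  qed
  fix i j assume "i \<le> ?n" "j \<le> ?n" "rho X x i = rho X x j"
  then show "\<sigma> i = \<sigma> j"
  proof (cases i j rule: linorder_cases)
    case less then show ?thesis using lt[of i j] \<open>j \<le> ?n\<close> \<open>rho X x i = rho X x j\<close> by simp
  next
    case equal then show ?thesis by simp
  next
    case greater then show ?thesis using lt[of j i] \<open>i \<le> ?n\<close> \<open>rho X x i = rho X x j\<close> by simp
  qed
qed


lemma key:
  assumes X: "is_sset X" and R: "R \<in> desing_index X" and x: "x \<in> sim X n"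
    and t: "sop k n \<theta>" and t': "sop k n \<theta>'"
    and eqr: "\<forall>i\<le>k. rho X x (\<theta> i) = rho X x (\<theta>' i)"
  shows "R k `` {act X n k \<theta> x} = R k `` {act X n k \<theta>' x}"
proof -
  have c: "compatible X R" and ns: "nonsingular (quot X R)" using R unfolding desing_index_def by auto
  have eq: "\<And>k. equiv (sim X k) (R k)" using c unfolding compatible_def by blast
  have dx: "deg X x = n" using ss_deg[OF X x] .
  have "R n `` {x} \<in> sim (quot X R) n" unfolding quot_def using x by (simp add: quotientI)
  from EZ[OF X c this] obtain m \<sigma> w where s: "sop n m \<sigma>" and w: "w \<in> sim X m"
     and nd: "nondeg (quot X R) m (R m `` {w})" and xw: "R n `` {x} = R n `` {act X m n \<sigma> w}"
    by blast
  have ws: "act X m n \<sigma> w \<in> sim X n" using ss_cl[OF X s w] .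
  have xr: "(x, act X m n \<sigma> w) \<in> R n" using eq_equiv_class_iff[OF eq[of n] x ws] xw by simp
  have gen: "(act X n j \<phi> x, act X m j (\<sigma> \<circ> \<phi>) w) \<in> R j" if ph: "sop j n \<phi>" for j \<phi>
  proof -
    have "(act X n j \<phi> x, act X n j \<phi> (act X m n \<sigma> w)) \<in> R j"
      using c ph xr unfolding compatible_def by blast
    then show ?thesis using ss_comp[OF X s ph w] by simp
  qed
  have v: "\<sigma> i = \<sigma> j" if ij: "i \<le> deg X x" "j \<le> deg X x" "vsim X x i j" for i j
  proof -
    have i: "sop 0 n (\<lambda>_. i)" and j: "sop 0 n (\<lambda>_. j)" using ij dx unfolding sop_def by auto
    have "\<sigma> i \<le> m" "\<sigma> j \<le> m" using s ij dx unfolding sop_def by auto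
    then have si: "sop 0 m (\<lambda>_. \<sigma> i)" and sj: "sop 0 m (\<lambda>_. \<sigma> j)" unfolding sop_def by auto
    have e: "act X n 0 (\<lambda>_. i) x = act X n 0 (\<lambda>_. j) x" using ij(3) dx unfolding vsim_def by simp
    have a1: "(act X n 0 (\<lambda>_. i) x, act X m 0 (\<lambda>_. \<sigma> i) w) \<in> R 0"
      using gen[OF i] by (simp add: comp_def)
    have a2: "(act X n 0 (\<lambda>_. j) x, act X m 0 (\<lambda>_. \<sigma> j) w) \<in> R 0"
      using gen[OF j] by (simp add: comp_def)
    have sy: "sym (R 0)" and tr: "trans (R 0)" using eq[of 0] unfolding equiv_def by auto
    have "(act X m 0 (\<lambda>_. \<sigma> i) w, act X n 0 (\<lambda>_. i) x) \<in> R 0" using a1 sy unfolding sym_def by blast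
    then have "(act X m 0 (\<lambda>_. \<sigma> i) w, act X m 0 (\<lambda>_. \<sigma> j) w) \<in> R 0"
      using a2 e tr unfolding trans_def by metis
    then have "R 0 `` {act X m 0 (\<lambda>_. \<sigma> i) w} = R 0 `` {act X m 0 (\<lambda>_. \<sigma> j) w}"
      by (rule equiv_class_eq[OF eq[of 0]])
    then have "act (quot X R) m 0 (\<lambda>_. \<sigma> i) (R m `` {w}) = act (quot X R) m 0 (\<lambda>_. \<sigma> j) (R m `` {w})"
      using quot_act[OF X c w si] quot_act[OF X c w sj] by simp
    then have "\<forall>l\<le>0. (\<lambda>_. \<sigma> i) l = (\<lambda>_. \<sigma> j) (l::nat)"
      using ns nd si sj unfolding nonsingular_def by blast
    then show ?thesis by simp
  qed
  have s': "sop (deg X x) m \<sigma>" using s dx by simp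
  have rf: "\<sigma> (\<theta> l) = \<sigma> (\<theta>' l)" if l: "l \<le> k" for l
  proof -
    have "\<theta> l \<le> deg X x" "\<theta>' l \<le> deg X x" using t t' l dx unfolding sop_def by auto
    moreover have "rho X x (\<theta> l) = rho X x (\<theta>' l)" using eqr l by blast
    ultimately show ?thesis using rho_factor[of X x m \<sigma>] s' v by blast
  qed
  have st: "sop k m (\<sigma> \<circ> \<theta>)" by (rule sop_comp[OF s t])
  have same: "act X m k (\<sigma> \<circ> \<theta>) w = act X m k (\<sigma> \<circ> \<theta>') w"
    by (rule ss_cong[OF X st _ w]) (simp add: rf)
  have "R k `` {act X n k \<theta> x} = R k `` {act X m k (\<sigma> \<circ> \<theta>) w}"
    by (rule equiv_class_eq[OF eq[of k] gen[OF t]])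
  also have "\<dots> = R k `` {act X m k (\<sigma> \<circ> \<theta>') w}" using same by simp
  also have "\<dots> = R k `` {act X n k \<theta>' x}"
    by (rule sym, rule equiv_class_eq[OF eq[of k] gen[OF t']])
  finally show ?thesis .
qed

lemma pm_eq: "is_sset X \<Longrightarrow> y \<in> sim X k \<Longrightarrow>
   prod_map X y = (k, \<lambda>R. if R \<in> desing_index X then R k `` {y} else {})"
proof -
  assume X: "is_sset X" and y: "y \<in> sim X k"
  have "deg X y = k" by (rule ss_deg[OF X y])
  then show ?thesis unfolding prod_map_def by (simp cong: if_cong)
qed

theorem mainTheorem5:
  fixes X :: "'a sset" and S :: "'a set"
  assumes "is_sset X"
    and "S \<subseteq> nondeg_simplices X"
  shows "\<exists>g. smap (coprod S (\<lambda>s. Delta (mdeg X s))) (Desing X) g \<and>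
             (\<forall>k z. z \<in> sim (coprod S (\<lambda>s. Delta (deg X s))) k \<longrightarrow>
                    g (coprod_rho X z) = eta X (coprod_rep X z))"
proof -
  note X = assms(1)
  define g where "g z = prod_map X (act X (deg X (fst z)) (fst (snd z))
      (SOME \<theta>. sop (fst (snd z)) (deg X (fst z)) \<theta> \<and>
          (\<forall>i\<le>fst (snd z). rho X (fst z) (\<theta> i) = snd (snd z) i)) (fst z))" for z
  have sdeg: "s \<in> sim X (deg X s)" if sS: "s \<in> S" for s
  proof -
    obtain n where "nondeg X n s" using sS assms(2) unfolding nondeg_simplices_def by blast
    then have "s \<in> sim X n" unfolding nondeg_def by blast
    then show ?thesis using ss_deg[OF X] by simp
  qed
  have gval: "g (s, (k, \<phi>)) = prod_map X (act X (deg X s) k \<theta> s)"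
    if sS: "s \<in> S" and t: "sop k (deg X s) \<theta>" and r: "\<forall>i\<le>k. rho X s (\<theta> i) = \<phi> i" for s k \<phi> \<theta>
  proof -
    define \<theta>0 where "\<theta>0 = (SOME \<theta>. sop k (deg X s) \<theta> \<and> (\<forall>i\<le>k. rho X s (\<theta> i) = \<phi> i))"
    have "sop k (deg X s) \<theta>0 \<and> (\<forall>i\<le>k. rho X s (\<theta>0 i) = \<phi> i)"
      unfolding \<theta>0_def by (rule someI[of _ \<theta>]) (use t r in blast)
    then have t0: "sop k (deg X s) \<theta>0" and r0: "\<forall>i\<le>k. rho X s (\<theta>0 i) = \<phi> i" by auto
    have gs: "g (s, (k, \<phi>)) = prod_map X (act X (deg X s) k \<theta>0 s)"
      unfolding g_def \<theta>0_def by simp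
    have m0: "act X (deg X s) k \<theta>0 s \<in> sim X k" by (rule ss_cl[OF X t0 sdeg[OF sS]])
    have m1: "act X (deg X s) k \<theta> s \<in> sim X k" by (rule ss_cl[OF X t sdeg[OF sS]])
    have "\<forall>R. (if R \<in> desing_index X then R k `` {act X (deg X s) k \<theta>0 s} else {})
         = (if R \<in> desing_index X then R k `` {act X (deg X s) k \<theta> s} else {})"
    proof
      fix R show "(if R \<in> desing_index X then R k `` {act X (deg X s) k \<theta>0 s} else {})
         = (if R \<in> desing_index X then R k `` {act X (deg X s) k \<theta> s} else {})"
      proof (cases "R \<in> desing_index X")
        case True
        have "\<forall>i\<le>k. rho X s (\<theta>0 i) = rho X s (\<theta> i)" using r r0 by simp
        then show ?thesis using key[OF X True sdeg[OF sS] t0 t] True by simp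
      qed simp
    qed
    then show ?thesis using gs pm_eq[OF X m0] pm_eq[OF X m1] by simp
  qed
  have dom: "s \<in> S \<and> sop k (mdeg X s) \<phi>" if "(s, (k', \<phi>)) \<in> sim (coprod S (\<lambda>s. Delta (mdeg X s))) k"
    for s k' \<phi> k
    using that unfolding coprod_def Delta_def by auto
  have dk: "k' = k" if "(s, (k', \<phi>)) \<in> sim (coprod S (\<lambda>s. Delta (mdeg X s))) k" for s k' \<phi> k
    using that unfolding coprod_def Delta_def by auto
  have sm: "smap (coprod S (\<lambda>s. Delta (mdeg X s))) (Desing X) g"
    unfolding smap_def
  proof (intro conjI allI impI)
    fix n z assume z: "z \<in> sim (coprod S (\<lambda>s. Delta (mdeg X s))) n"
    obtain s k \<phi> where zz: "z = (s, (k, \<phi>))" by (cases z) auto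
    have kn: "k = n" using dk z zz by blast
    have sS: "s \<in> S" and ph: "sop n (mdeg X s) \<phi>" using dom z zz kn by blast+
    obtain \<theta> where t: "sop n (deg X s) \<theta>" and r: "\<forall>i\<le>n. rho X s (\<theta> i) = \<phi> i"
      using rho_section[OF ph] by blast
    have "g z = prod_map X (act X (deg X s) n \<theta> s)" using gval[OF sS t r] zz kn by simp
    moreover have "act X (deg X s) n \<theta> s \<in> sim X n" by (rule ss_cl[OF X t sdeg[OF sS]])
    ultimately show "g z \<in> sim (Desing X) n" unfolding Desing_def by simp
  next
    fix n m \<psi> z assume ps: "sop m n \<psi>" and z: "z \<in> sim (coprod S (\<lambda>s. Delta (mdeg X s))) n"
    obtain s k \<phi> where zz: "z = (s, (k, \<phi>))" by (cases z) auto
    have kn: "k = n" using dk z zz by blast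
    have sS: "s \<in> S" and ph: "sop n (mdeg X s) \<phi>" using dom z zz kn by blast+
    obtain \<theta> where t: "sop n (deg X s) \<theta>" and r: "\<forall>i\<le>n. rho X s (\<theta> i) = \<phi> i"
      using rho_section[OF ph] by blast
    have az: "act (coprod S (\<lambda>s. Delta (mdeg X s))) n m \<psi> z
        = (s, (m, \<lambda>i. if i \<le> m then \<phi> (\<psi> i) else 0))"
      unfolding coprod_def Delta_def using zz by (simp cong: if_cong)
    have tp: "sop m (deg X s) (\<theta> \<circ> \<psi>)" by (rule sop_comp[OF t ps])
    have "\<forall>i\<le>m. \<psi> i \<le> n" using ps unfolding sop_def by blast
    then have rp: "\<forall>i\<le>m. rho X s ((\<theta> \<circ> \<psi>) i) = (if i \<le> m then \<phi> (\<psi> i) else 0)"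
      using r by simp
    have L: "g (act (coprod S (\<lambda>s. Delta (mdeg X s))) n m \<psi> z)
        = prod_map X (act X (deg X s) m (\<theta> \<circ> \<psi>) s)"
      using az gval[OF sS tp rp] by (simp add: comp_def)
    have gz: "g z = prod_map X (act X (deg X s) n \<theta> s)" using gval[OF sS t r] zz kn by simp
    have m1: "act X (deg X s) n \<theta> s \<in> sim X n" by (rule ss_cl[OF X t sdeg[OF sS]])
    have m2: "act X (deg X s) m (\<theta> \<circ> \<psi>) s \<in> sim X m" by (rule ss_cl[OF X tp sdeg[OF sS]])
    have cmp: "act X n m \<psi> (act X (deg X s) n \<theta> s) = act X (deg X s) m (\<theta> \<circ> \<psi>) s"
      by (rule ss_comp[OF X t ps sdeg[OF sS]])
    have "\<forall>R. (if R \<in> desing_index X then act (quot X R) n m \<psi>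
              (if R \<in> desing_index X then R n `` {act X (deg X s) n \<theta> s} else {}) else {})
         = (if R \<in> desing_index X then R m `` {act X (deg X s) m (\<theta> \<circ> \<psi>) s} else {})"
    proof
      fix R show "(if R \<in> desing_index X then act (quot X R) n m \<psi>
              (if R \<in> desing_index X then R n `` {act X (deg X s) n \<theta> s} else {}) else {})
         = (if R \<in> desing_index X then R m `` {act X (deg X s) m (\<theta> \<circ> \<psi>) s} else {})"
      proof (cases "R \<in> desing_index X")
        case True
        then have c: "compatible X R" unfolding desing_index_def by simp
        show ?thesis using True quot_act[OF X c m1 ps] cmp by simp
      qed simp
    qed
    then have "act (Desing X) n m \<psi> (g z) = prod_map X (act X (deg X s) m (\<theta> \<circ> \<psi>) s)"
      unfolding gz pm_eq[OF X m1] pm_eq[OF X m2] Desing_def by (simp cong: if_cong add: fun_eq_iff)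
    with L show "g (act (coprod S (\<lambda>s. Delta (mdeg X s))) n m \<psi> z) = act (Desing X) n m \<psi> (g z)"
      by simp
  qed
  have cm: "\<forall>k z. z \<in> sim (coprod S (\<lambda>s. Delta (deg X s))) k \<longrightarrow>
                    g (coprod_rho X z) = eta X (coprod_rep X z)"
  proof (intro allI impI)
    fix k z assume z: "z \<in> sim (coprod S (\<lambda>s. Delta (deg X s))) k"
    obtain s k' \<theta> where zz: "z = (s, (k', \<theta>))" by (cases z) auto
    have kk: "k' = k" and sS: "s \<in> S" and t: "sop k (deg X s) \<theta>"
      using z zz unfolding coprod_def Delta_def by auto
    have cr: "coprod_rho X z = (s, (k, \<lambda>i. if i \<le> k then rho X s (\<theta> i) else 0))"
      unfolding coprod_rho_def rho_map_def using zz kk by (simp cong: if_cong)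
    have r: "\<forall>i\<le>k. rho X s (\<theta> i) = (if i \<le> k then rho X s (\<theta> i) else 0)" by simp
    show "g (coprod_rho X z) = eta X (coprod_rep X z)"
      using gval[OF sS t r] cr zz kk unfolding eta_def coprod_rep_def by simp
  qed
  show ?thesis using sm cm by blast
qed

end
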